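(* Let $d\ge2$ and let $Q$ be a qplex containing infinitely many points of the out-sphere $S_{\rm o}$. Then there is no polytope $P$ (convex hull of finitely many points) with $P\subseteq Q$ and $B_{\rm i}\subseteq P$; i.e., no polytope inscribed in $Q$ contains the in-sphere $S_{\rm i}$.
   Context: Fix an integer $d\ge 2$. $\langle\cdot,\cdot\rangle$ is the standard inner product on $\mathbb{R}^{d^2}$, $\|\cdot\|$ the Euclidean norm. $\Delta=\{p\in\mathbb{R}^{d^2}: p(i)\ge0,\ \sum_ip(i)=1\}$; $H=\{u\in\mathbb{R}^{d^2}:\sum_i u(i)=1\}$; $c=(1/d^2,\dots,1/d^2)$. For $A\subseteq H$ the polar is $A^*=\{u\in H:\langle u,v\rangle\ge\frac{1}{d(d+1)}\ \forall v\in A\}$. Out-ball $B_{\rm o}=\{u\in H:\|u-c\|\le r_{\rm o}\}$ with $r_{\rm o}^2=\frac{d-1}{d^2(d+1)}$, and out-sphere $S_{\rm o}=\{u\in H:\|u-c\|=r_{\rm o}\}$ (its points in a qplex are called pure points). In-ball $B_{\rm i}=\{u\in H:\|u-c\|\le r_{\rm i}\}$ with $r_{\rm i}^2=\frac{1}{d^2(d^2-1)}$ and in-sphere $S_{\rm i}$ its boundary in $H$. A qplex is a set $Q\subseteq\Delta\cap B_{\rm o}$ with $Q^*=Q$. *)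

theory Defs
  imports "HOL-Analysis.Analysis"
begin

text \<open>Ambient space R^(d^2) is rendered as real^'n with CARD('n) = d^2 (assumed in the theorem).
All notions are parameterised by d.\<close>

definition prob_simplex :: "(real^'n) set" where
  "prob_simplex = {p. (\<forall>i. 0 \<le> p $ i) \<and> (\<Sum>i\<in>UNIV. p $ i) = 1}"

definition hplane :: "(real^'n) set" where
  "hplane = {u. (\<Sum>i\<in>UNIV. u $ i) = 1}"

definition centre :: "nat \<Rightarrow> real^'n" where
  "centre d = (\<chi> i. 1 / (real d)^2)"

definition polar :: "nat \<Rightarrow> (real^'n) set \<Rightarrow> (real^'n) set" where
  "polar d A = {u \<in> hplane. \<forall>v\<in>A. inner u v \<ge> 1 / (real d * (real d + 1))}"

definition r_out :: "nat \<Rightarrow> real" where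
  "r_out d = sqrt ((real d - 1) / ((real d)^2 * (real d + 1)))"

definition r_in :: "nat \<Rightarrow> real" where
  "r_in d = sqrt (1 / ((real d)^2 * ((real d)^2 - 1)))"

definition out_ball :: "nat \<Rightarrow> (real^'n) set" where
  "out_ball d = {u \<in> hplane. norm (u - centre d) \<le> r_out d}"

definition out_sphere :: "nat \<Rightarrow> (real^'n) set" where
  "out_sphere d = {u \<in> hplane. norm (u - centre d) = r_out d}"

definition in_ball :: "nat \<Rightarrow> (real^'n) set" where
  "in_ball d = {u \<in> hplane. norm (u - centre d) \<le> r_in d}"

definition in_sphere :: "nat \<Rightarrow> (real^'n) set" where
  "in_sphere d = {u \<in> hplane. norm (u - centre d) = r_in d}"

definition qplex :: "nat \<Rightarrow> (real^'n) set \<Rightarrow> bool" where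
  "qplex d Q \<longleftrightarrow> Q \<subseteq> prob_simplex \<inter> out_ball d \<and> polar d Q = Q"

end

theory Submission
  imports Defs
begin

lemma sum_hplane: "u \<in> hplane \<Longrightarrow> (\<Sum>i\<in>UNIV. u $ i) = 1"
  by (simp add: hplane_def)

lemma inner_centre:
  fixes u :: "real^'n"
  shows "inner u (centre d) = (\<Sum>i\<in>UNIV. u $ i) / (real d)^2"
  by (simp add: inner_vec_def centre_def sum_divide_distrib)

lemma rad_facts:
  assumes "d \<ge> 2"
  shows "r_in d > 0" "r_out d > 0" "r_out d * r_in d = 1 / ((real d)^2 * (real d + 1))"
proof -
  have d: "real d \<ge> 2" using assms by simp
  have "(2::real)^2 \<le> (real d)^2" using power_mono[OF d, of 2] by simp
  then have a: "(real d)^2 - 1 > 0" by simp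
  show "r_in d > 0" unfolding r_in_def using a d by simp
  show "r_out d > 0" unfolding r_out_def using d by simp
  have "r_out d * r_in d = sqrt ((real d - 1) / ((real d)^2 * (real d + 1)) * (1 / ((real d)^2 * ((real d)^2 - 1))))"
    unfolding r_out_def r_in_def by (rule real_sqrt_mult[symmetric])
  also have "(real d - 1) / ((real d)^2 * (real d + 1)) * (1 / ((real d)^2 * ((real d)^2 - 1)))
      = (1 / ((real d)^2 * (real d + 1)))^2"
  proof -
    have "(real d)^2 - 1 = (real d - 1) * (real d + 1)" by (simp add: power2_eq_square algebra_simps)
    moreover have "\<And>a b e c::real. a \<noteq> 0 \<Longrightarrow> a / b * (1 / (e * (a * c))) = 1 / (b * e * c)"
      by simp
    moreover have "real d - 1 \<noteq> 0" using d by simp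
    ultimately show ?thesis by (simp add: power2_eq_square mult.assoc)
  qed
  also have "sqrt \<dots> = 1 / ((real d)^2 * (real d + 1))" using d by simp
  finally show "r_out d * r_in d = 1 / ((real d)^2 * (real d + 1))" .
qed

theorem mainTheorem6:
  fixes d :: nat and Q :: "(real^'n) set"
  assumes "d \<ge> 2" and "CARD('n) = d^2"
    and "qplex d Q"
    and "infinite (Q \<inter> out_sphere d)"
  shows "\<not> (\<exists>P. polytope P \<and> P \<subseteq> Q \<and> in_ball d \<subseteq> P)"
proof
  assume "\<exists>P. polytope P \<and> P \<subseteq> Q \<and> in_ball d \<subseteq> P"
  then obtain P where P: "polytope P" "P \<subseteq> Q" "in_ball d \<subseteq> P" by blast
  define c :: "real^'n" where "c = centre d"
  define ri where "ri = r_in d"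
  define ro where "ro = r_out d"
  define k where "k = 1 / (real d * (real d + 1))"
  have d: "real d \<ge> 2" using assms(1) by simp
  have ri: "ri > 0" and ro: "ro > 0" and rr: "ro * ri = 1 / ((real d)^2 * (real d + 1))"
    using rad_facts[OF assms(1)] by (auto simp: ri_def ro_def)
  have qpol: "polar d Q = Q" and qsub: "Q \<subseteq> prob_simplex \<inter> out_ball d"
    using assms(3) by (auto simp: qplex_def)
  have Qh: "Q \<subseteq> hplane" using qsub by (auto simp: prob_simplex_def hplane_def)
  have Qpol: "\<And>p x. p \<in> Q \<Longrightarrow> x \<in> Q \<Longrightarrow> inner p x \<ge> k"
  proof -
    fix p x assume "p \<in> Q" "x \<in> Q"
    then have "p \<in> polar d Q" using qpol by simp
    then show "inner p x \<ge> k" using \<open>x \<in> Q\<close> by (auto simp: polar_def k_def)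
  qed
  have ch: "\<And>u. u \<in> hplane \<Longrightarrow> inner u c = 1 / (real d)^2"
    by (simp add: c_def inner_centre sum_hplane)
  have cc: "inner c c = 1 / (real d)^2"
    by (simp add: c_def centre_def inner_vec_def assms(2) power2_eq_square)
  have sumc: "(\<Sum>i\<in>UNIV. c $ i) = 1"
    using d by (simp add: c_def centre_def assms(2))
  have kk: "k = 1 / (real d)^2 - ro * ri"
  proof -
    have g: "1 / (D * (D + 1)) = 1 / D^2 - 1 / (D^2 * (D + 1))" if D: "D > 0" for D :: real
    proof -
      have D1: "D + 1 > 0" using D by simp
      have "1/D^2 = (D+1)/(D^2*(D+1))" using D1 by simp
      then have "1/D^2 - 1/(D^2*(D+1)) = ((D+1) - 1)/(D^2*(D+1))" by (simp only: diff_divide_distrib)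
      also have "\<dots> = 1/(D*(D+1))" using D by (simp add: power2_eq_square)
      finally show ?thesis by simp
    qed
    show ?thesis unfolding rr k_def using g[of "real d"] d by simp
  qed
  define t where "t = ri / ro"
  have tro: "t * ro = ri" using ro by (simp add: t_def)
  have t0: "t > 0" using ri ro by (simp add: t_def)
  define v where "v p = c - t *\<^sub>R (p - c)" for p
  define F where "F p = P \<inter> {x. inner p x = k}" for p
  have key: "x = v p" if p: "p \<in> Q \<inter> out_sphere d" and x: "x \<in> in_ball d" "inner p x = k" for p x
  proof -
    define w where "w = p - c"
    define y where "y = x - c"
    have ph: "p \<in> hplane" using p Qh by auto
    have xh: "x \<in> hplane" using x by (simp add: in_ball_def)
    have nw: "norm w = ro" using p by (simp add: out_sphere_def w_def c_def ro_def)
    have ny: "norm y \<le> ri" using x by (simp add: in_ball_def y_def c_def ri_def)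
    have "inner p x = inner p c + inner p y" by (simp add: y_def inner_diff_right)
    also have "inner p c = 1 / (real d)^2" using ch[OF ph] .
    also have "inner p y = inner w y + inner c y" by (simp add: w_def inner_diff_left)
    also have "inner c y = 0" using ch[OF xh] cc by (simp add: y_def inner_diff_right inner_commute)
    finally have wy: "inner w y = - (ro * ri)" using x(2) kk by simp
    have ww: "inner w w = ro * ro" using nw by (simp add: power2_norm_eq_inner[symmetric] power2_eq_square)
    have yy: "inner y y = (norm y)^2" by (simp add: power2_norm_eq_inner)
    have "(norm (y + t *\<^sub>R w))^2 = inner (y + t *\<^sub>R w) (y + t *\<^sub>R w)"
      by (simp only: power2_norm_eq_inner)
    also have "\<dots> = inner y y + t * inner y w + (t * inner w y + t * (t * inner w w))"
      by (simp only: inner_add_left inner_add_right inner_scaleR_left inner_scaleR_right) (simp add: algebra_simps)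
    also have "\<dots> = inner y y + 2 * t * inner w y + t * t * inner w w"
      by (simp add: inner_commute[of y w] algebra_simps)
    also have "\<dots> = (norm y)^2 - ri * ri" unfolding yy wy ww tro[symmetric] by (simp add: algebra_simps)
    also have "\<dots> \<le> 0" using mult_mono[OF ny ny] norm_ge_zero[of y] ri
      by (simp add: power2_eq_square)
    finally have "norm (y + t *\<^sub>R w) = 0" by simp
    then have "y = - (t *\<^sub>R w)" by (simp add: add_eq_0_iff)
    then show ?thesis by (simp add: v_def y_def w_def algebra_simps)
  qed
  have vin: "v p \<in> in_ball d \<and> inner p (v p) = k" if p: "p \<in> Q \<inter> out_sphere d" for p
  proof -
    have ph: "p \<in> hplane" using p Qh by auto
    have nw: "norm (p - c) = ro" using p by (simp add: out_sphere_def c_def ro_def)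
    have wc: "inner (p - c) c = 0" using ch[OF ph] cc by (simp add: inner_diff_left)
    have comp: "v p $ i = c $ i - t * (p $ i - c $ i)" for i by (simp add: v_def)
    have "(\<Sum>i\<in>UNIV. v p $ i) = (\<Sum>i\<in>UNIV. c $ i) - t * ((\<Sum>i\<in>UNIV. p $ i) - (\<Sum>i\<in>UNIV. c $ i))"
      unfolding comp by (simp add: sum_subtractf sum_distrib_left[symmetric])
    then have vh: "v p \<in> hplane" using sumc sum_hplane[OF ph] by (simp add: hplane_def)
    have "v p - c = - (t *\<^sub>R (p - c))" by (simp add: v_def)
    then have "norm (v p - c) = t * ro" using nw t0 by simp
    then have "norm (v p - centre d) = ri" using tro by (simp add: c_def)
    then have "v p \<in> in_ball d" using vh by (simp add: in_ball_def ri_def)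
    moreover have "inner p (v p) = k"
    proof -
      have "inner p (v p) = inner p c - t * inner p (p - c)" by (simp add: v_def inner_diff_right)
      also have "inner p (p - c) = inner (p - c) (p - c) + inner c (p - c)"
        by (simp add: inner_diff_left inner_diff_right)
      also have "inner c (p - c) = 0" using wc by (simp add: inner_commute)
      also have "inner (p - c) (p - c) = ro * ro" using nw by (simp add: power2_norm_eq_inner[symmetric] power2_eq_square)
      also have "inner p c = 1 / (real d)^2" using ch[OF ph] .
      finally have "inner p (v p) = 1 / (real d)^2 - t * (ro * ro + 0)" .
      then show ?thesis unfolding kk tro[symmetric] by (simp add: algebra_simps)
    qed
    ultimately show ?thesis by blast
  qed
  have face: "F p face_of P" if "p \<in> Q" for p
    unfolding F_def
    by (rule face_of_Int_supporting_hyperplane_ge[OF polytope_imp_convex[OF P(1)]])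
       (use Qpol that P(2) in auto)
  have inj: "inj_on F (Q \<inter> out_sphere d)"
  proof (rule inj_onI)
    fix p q assume p: "p \<in> Q \<inter> out_sphere d" and q: "q \<in> Q \<inter> out_sphere d" and e: "F p = F q"
    have "v q \<in> F q" using vin[OF q] P(3) by (auto simp: F_def)
    then have "v q \<in> F p" using e by simp
    then have "inner p (v q) = k" by (simp add: F_def)
    then have "v q = v p" using key[OF p] vin[OF q] by blast
    then have "t *\<^sub>R (p - c) = t *\<^sub>R (q - c)" using t0 by (auto simp: v_def)
    then show "p = q" using t0 by simp
  qed
  have "F ` (Q \<inter> out_sphere d) \<subseteq> {G. G face_of P}" using face by auto
  then have "finite (F ` (Q \<inter> out_sphere d))"
    using finite_polytope_faces[OF P(1)] finite_subset by blast
  then have "finite (Q \<inter> out_sphere d)" using inj finite_imageD by blast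
  then show False using assms(4) by simp
qed

end
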